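(* Let $\bar a>0$ and $b>0$ be real constants and consider the system of ordinary differential equations on $\mathbb{R}^3$ \begin{align*} \dot q_1 &= q_1\,[\bar a - 2b q_1 - b q_2 - b q_3],\\ \dot q_2 &= q_2\,[\bar a - b q_1 - 2b q_2 - b q_3],\\ \dot q_3 &= q_3\,[\bar a - b q_1 - b q_2 - 2b q_3]. \end{align*} Let $E_8$ denote the equilibrium of this system all of whose coordinates are strictly positive (the Cournot equilibrium, $E_8=(q^*,q^*,q^* )$ with $q^*=\bar a/(4b)$). Then $E_8$ is a stable node.
   Context: This system models a Cournot triopoly of identical firms with linear inverse demand $p=a-bQ$, $Q=q_1+q_2+q_3$, identical linear cost $C(q_i)=c+dq_i$, $\bar a=a-d$, and gradient (bounded rationality) adjustment with unit speed; $q_i$ is the output of firm $i$. A stable node is a hyperbolic equilibrium whose linearization has only real, strictly negative eigenvalues. *)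

theory Defs
  imports "HOL-Analysis.Analysis"
begin

text \<open>Gradient-adjustment Cournot triopoly vector field on R^3 (abar = a - d, unit speed).\<close>
definition cournot_field :: "real \<Rightarrow> real \<Rightarrow> real^3 \<Rightarrow> real^3" where
  "cournot_field abar b q =
     (\<chi> i. if i = 1 then q$1 * (abar - 2*b*q$1 - b*q$2 - b*q$3)
           else if i = 2 then q$2 * (abar - b*q$1 - 2*b*q$2 - b*q$3)
           else q$3 * (abar - b*q$1 - b*q$2 - 2*b*q$3))"

definition complex_eigenvalue :: "real^'n^'n \<Rightarrow> complex \<Rightarrow> bool" where
  "complex_eigenvalue J \<mu> \<longleftrightarrow>
     (\<exists>v::complex^'n. v \<noteq> 0 \<and> (\<chi> i j. complex_of_real (J$i$j)) *v v = \<mu> *s v)"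

definition hyperbolic_equilibrium_with_jacobian ::
  "(real^'n \<Rightarrow> real^'n) \<Rightarrow> real^'n \<Rightarrow> real^'n^'n \<Rightarrow> bool" where
  "hyperbolic_equilibrium_with_jacobian F x J \<longleftrightarrow>
     F x = 0 \<and> (F has_derivative (\<lambda>h. J *v h)) (at x) \<and>
     (\<forall>\<mu>. complex_eigenvalue J \<mu> \<longrightarrow> Re \<mu> \<noteq> 0)"

definition stable_node :: "(real^'n \<Rightarrow> real^'n) \<Rightarrow> real^'n \<Rightarrow> bool" where
  "stable_node F x \<longleftrightarrow>
     (\<exists>J. hyperbolic_equilibrium_with_jacobian F x J \<and>
          (\<forall>\<mu>. complex_eigenvalue J \<mu> \<longrightarrow> Im \<mu> = 0 \<and> Re \<mu> < 0))"

end

theory Submission imports Defs begin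
lemma nth_deriv: "((\<lambda>x::real^'n. x$i) has_derivative (\<lambda>h. h$i)) F"
  by (rule bounded_linear_imp_has_derivative[OF bounded_linear_vec_nth])

lemma vec_deriv:
  fixes f :: "real^'m \<Rightarrow> real^'n"
  assumes "\<And>i. ((\<lambda>x. f x $ i) has_derivative (\<lambda>h. f' h $ i)) (at q)"
  shows "(f has_derivative f') (at q)"
  using assms
  by (subst has_derivative_componentwise_within) (auto simp: Basis_vec_def inner_axis)

lemma eq_point:
  fixes abar b :: real
  assumes "b > 0" "cournot_field abar b E = 0" "\<forall>i. 0 < E$i"
  shows "E = (\<chi> i. abar / (4*b))"
proof -
  have p: "E$1 > 0" "E$2 > 0" "E$3 > 0" using assms(3) by auto
  have c: "cournot_field abar b E $ i = 0" for i using assms(2) by simp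
  have e1: "abar - 2*b*E$1 - b*E$2 - b*E$3 = 0" using c[of 1] p by (simp add: cournot_field_def)
  have e2: "abar - b*E$1 - 2*b*E$2 - b*E$3 = 0" using c[of 2] p by (simp add: cournot_field_def)
  have e3: "abar - b*E$1 - b*E$2 - 2*b*E$3 = 0" using c[of 3] p by (simp add: cournot_field_def)
  have "b*E$1 = abar/4" "b*E$2 = abar/4" "b*E$3 = abar/4" using e1 e2 e3 by linarith+
  hence "E$1 = abar/(4*b)" "E$2 = abar/(4*b)" "E$3 = abar/(4*b)" using assms(1)
    by (auto simp: field_simps)
  thus ?thesis by (simp add: vec_eq_iff forall_3)
qed

lemma eig:
  fixes c :: real and J :: "real^3^3"
  assumes "c > 0" "J = (\<chi> i j. if i = j then -2*c else -c)" "complex_eigenvalue J \<mu>"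
  shows "Im \<mu> = 0 \<and> Re \<mu> < 0"
proof -
  obtain v :: "complex^3" where v: "v \<noteq> 0" "(\<chi> i j. complex_of_real (J$i$j)) *v v = \<mu> *s v"
    using assms(3) unfolding complex_eigenvalue_def by blast
  have k: "((\<chi> i j. complex_of_real (J$i$j)) *v v) $ i = (\<mu> *s v) $ i" for i using v(2) by simp
  define C where "C = complex_of_real c"
  have q1: "-2*C * v$1 - C * v$2 - C * v$3 = \<mu> * v$1" using k[of 1]
    by (simp add: assms(2) matrix_vector_mult_def sum_3 C_def)
  have q2: "-C * v$1 - 2*C * v$2 - C * v$3 = \<mu> * v$2" using k[of 2]
    by (simp add: assms(2) matrix_vector_mult_def sum_3 C_def)
  have q3: "-C * v$1 - C * v$2 - 2*C * v$3 = \<mu> * v$3" using k[of 3]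
    by (simp add: assms(2) matrix_vector_mult_def sum_3 C_def)
  have "\<mu> = -4*C \<or> \<mu> = -C"
  proof (cases "v$1 + v$2 + v$3 = 0")
    case False
    have "(\<mu> + 4*C) * (v$1 + v$2 + v$3) = (\<mu> * v$1 - (-2*C * v$1 - C * v$2 - C * v$3))
       + (\<mu> * v$2 - (-C * v$1 - 2*C * v$2 - C * v$3)) + (\<mu> * v$3 - (-C * v$1 - C * v$2 - 2*C * v$3))"
      by (simp add: algebra_simps)
    also have "\<dots> = 0" using q1 q2 q3 by simp
    finally have "(\<mu> + 4*C) * (v$1 + v$2 + v$3) = 0" .
    hence "\<mu> + 4*C = 0" using False by simp
    thus ?thesis by (simp add: eq_neg_iff_add_eq_0)
  next
    case True
    have "(\<mu> + C) * v$1 = (\<mu> * v$1 - (-2*C * v$1 - C * v$2 - C * v$3)) - C * (v$1 + v$2 + v$3)"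
      by (simp add: algebra_simps)
    hence r1: "(\<mu> + C) * v$1 = 0" using q1 True by simp
    have "(\<mu> + C) * v$2 = (\<mu> * v$2 - (-C * v$1 - 2*C * v$2 - C * v$3)) - C * (v$1 + v$2 + v$3)"
      by (simp add: algebra_simps)
    hence r2: "(\<mu> + C) * v$2 = 0" using q2 True by simp
    have "(\<mu> + C) * v$3 = (\<mu> * v$3 - (-C * v$1 - C * v$2 - 2*C * v$3)) - C * (v$1 + v$2 + v$3)"
      by (simp add: algebra_simps)
    hence r3: "(\<mu> + C) * v$3 = 0" using q3 True by simp
    have "\<exists>i. v$i \<noteq> 0" using v(1) by (simp add: vec_eq_iff)
    then obtain i where "v$i \<noteq> 0" by blast
    hence h: "\<mu> + C = 0" using r1 r2 r3 exhaust_3[of i] by auto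
    thus ?thesis by (simp add: eq_neg_iff_add_eq_0)
  qed
  thus ?thesis using assms(1) by (auto simp: C_def)
qed
lemma field_deriv:
  fixes abar b :: real
  assumes "b > 0"
  defines "E \<equiv> (\<chi> i. abar / (4*b)) :: real^3"
  defines "J \<equiv> (\<chi> i j. if i = j then -2*(abar/4) else -(abar/4)) :: real^3^3"
  shows "(cournot_field abar b has_derivative (\<lambda>h. J *v h)) (at E)"
proof (rule vec_deriv)
  fix i :: 3
  have bq: "b * (abar/(4*b)) = abar/4" using assms(1) by simp
  have jv: "(J *v h) $ k = (\<Sum>j\<in>UNIV. (if k = j then -2*(abar/4) else -(abar/4)) * h$j)" for h k
    by (simp add: J_def matrix_vector_mult_def)
  consider "i = 1" | "i = 2" | "i = 3" using exhaust_3[of i] by blast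
  then show "((\<lambda>x. cournot_field abar b x $ i) has_derivative (\<lambda>h. (J *v h) $ i)) (at E)"
  proof cases
    case 1
    have "((\<lambda>x::real^3. x$1 * (abar - 2*b*x$1 - b*x$2 - b*x$3)) has_derivative
     (\<lambda>h. h$1 * (abar - 2*b*E$1 - b*E$2 - b*E$3) + E$1 * (- 2*b*h$1 - b*h$2 - b*h$3))) (at E)"
      by (rule derivative_eq_intros nth_deriv refl | simp)+ (rule ext, simp add: algebra_simps)
    moreover have "(\<lambda>h. h$1 * (abar - 2*b*E$1 - b*E$2 - b*E$3) + E$1 * (- 2*b*h$1 - b*h$2 - b*h$3))
        = (\<lambda>h. (J *v h) $ i)"
      using assms(1) by (auto simp: 1 jv sum_3 E_def field_simps)
    ultimately show ?thesis by (simp add: 1 cournot_field_def)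
  next
    case 2
    have "((\<lambda>x::real^3. x$2 * (abar - b*x$1 - 2*b*x$2 - b*x$3)) has_derivative
     (\<lambda>h. h$2 * (abar - b*E$1 - 2*b*E$2 - b*E$3) + E$2 * (- b*h$1 - 2*b*h$2 - b*h$3))) (at E)"
      by (rule derivative_eq_intros nth_deriv refl | simp)+ (rule ext, simp add: algebra_simps)
    moreover have "(\<lambda>h. h$2 * (abar - b*E$1 - 2*b*E$2 - b*E$3) + E$2 * (- b*h$1 - 2*b*h$2 - b*h$3))
        = (\<lambda>h. (J *v h) $ i)"
      using assms(1) by (auto simp: 2 jv sum_3 E_def field_simps)
    ultimately show ?thesis by (simp add: 2 cournot_field_def)
  next
    case 3
    have "((\<lambda>x::real^3. x$3 * (abar - b*x$1 - b*x$2 - 2*b*x$3)) has_derivative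
     (\<lambda>h. h$3 * (abar - b*E$1 - b*E$2 - 2*b*E$3) + E$3 * (- b*h$1 - b*h$2 - 2*b*h$3))) (at E)"
      by (rule derivative_eq_intros nth_deriv refl | simp)+ (rule ext, simp add: algebra_simps)
    moreover have "(\<lambda>h. h$3 * (abar - b*E$1 - b*E$2 - 2*b*E$3) + E$3 * (- b*h$1 - b*h$2 - 2*b*h$3))
        = (\<lambda>h. (J *v h) $ i)"
      using assms(1) by (auto simp: 3 jv sum_3 E_def field_simps)
    ultimately show ?thesis by (simp add: 3 cournot_field_def)
  qed
qed


theorem theorem1:
  fixes abar b :: real
  assumes "abar > 0" and "b > 0"
  shows "(\<exists>!E. cournot_field abar b E = 0 \<and> (\<forall>i. 0 < E$i)) \<and>
         (\<forall>E. cournot_field abar b E = 0 \<and> (\<forall>i. 0 < E$i) \<longrightarrow>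
              E = (\<chi> i. abar / (4*b)) \<and> stable_node (cournot_field abar b) E)"
proof -
  define E0 :: "real^3" where "E0 = (\<chi> i. abar / (4*b))"
  define J :: "real^3^3" where "J = (\<chi> i j. if i = j then -2*(abar/4) else -(abar/4))"
  have z: "cournot_field abar b E0 = 0"
    using assms(2) by (simp add: cournot_field_def E0_def vec_eq_iff field_simps)
  have pos: "\<forall>i. 0 < E0$i" using assms by (simp add: E0_def)
  have sn: "stable_node (cournot_field abar b) E0"
    unfolding stable_node_def hyperbolic_equilibrium_with_jacobian_def
  proof (intro exI[of _ J] conjI allI impI)
    show "cournot_field abar b E0 = 0" by (rule z)
    show "(cournot_field abar b has_derivative (*v) J) (at E0)"
      using field_deriv[OF assms(2), of abar] by (simp add: E0_def J_def)
    fix \<mu> assume h: "complex_eigenvalue J \<mu>"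
    have "Im \<mu> = 0 \<and> Re \<mu> < 0"
      by (rule eig[of "abar/4"]) (use assms h in \<open>auto simp: J_def\<close>)
    thus "Re \<mu> \<noteq> 0" "Im \<mu> = 0" "Re \<mu> < 0" by auto
  qed
  show ?thesis
  proof (intro conjI allI impI)
    show "\<exists>!E. cournot_field abar b E = 0 \<and> (\<forall>i. 0 < E$i)"
      using z pos eq_point[OF assms(2)] unfolding E0_def by blast
  next
    fix E assume h: "cournot_field abar b E = 0 \<and> (\<forall>i. 0 < E$i)"
    show e: "E = (\<chi> i. abar / (4*b))" using eq_point[OF assms(2)] h by blast
    show "stable_node (cournot_field abar b) E" using sn e by (simp add: E0_def)
  qed
qed

end
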